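(* Let $\mathcal{C}_2=\mathbb{C}\{e_1,e_2\}$ be the complex algebra with basis $1,e_1,e_2,e_{12}=e_1e_2$, where $e_1^2=e_2^2=-1$ and $e_1e_2=-e_2e_1$. Let $A\in\mathcal{C}_2^{m\times n}$ be written as $A=A_0+A_1e_1+A_2e_2+A_3e_{12}$ with $A_0,\dots,A_3\in\mathbb{C}^{m\times n}$. For a positive integer $t$ let $$K_{2t}=\frac12\begin{pmatrix}(1-ie_1)I_t & (e_2+ie_{12})I_t\\ (-e_2+ie_{12})I_t & (1+ie_1)I_t\end{pmatrix}.$$ Then $K_{2t}$ is invertible with $K_{2t}^{-1}=K_{2t}$, and $$K_{2m}\begin{pmatrix}A&0\\0&A\end{pmatrix}K_{2n}^{-1}=\begin{pmatrix}A_0+A_1i & -(A_2+A_3i)\\ A_2-A_3i & A_0-A_1i\end{pmatrix}.$$ In particular, if $m=n$ this is a similarity over $\mathcal{C}_2$.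
   Context: $i$ is the imaginary unit of $\mathbb{C}$, commuting with all elements of $\mathcal{C}_2$; $I_t$ is the $t\times t$ identity matrix. *)

theory Defs
  imports Complex_Main "Jordan_Normal_Form.Matrix"
begin

text \<open>The complex Clifford algebra C_2 = C{e1,e2}: elements a0 + a1 e1 + a2 e2 + a3 e12
  with complex coefficients, e1^2 = e2^2 = -1, e1 e2 = - e2 e1 = e12.\<close>

datatype C2 = C2 (cl0: complex) (cl1: complex) (cl2: complex) (cl3: complex)

instantiation C2 :: ring_1
begin
definition "0 = C2 0 0 0 0"
definition "1 = C2 1 0 0 0"
definition "x + y = C2 (cl0 x + cl0 y) (cl1 x + cl1 y) (cl2 x + cl2 y) (cl3 x + cl3 y)"
definition "x - y = C2 (cl0 x - cl0 y) (cl1 x - cl1 y) (cl2 x - cl2 y) (cl3 x - cl3 y)"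
definition "- x = C2 (- cl0 x) (- cl1 x) (- cl2 x) (- cl3 x)"
definition "x * y = C2
   (cl0 x * cl0 y - cl1 x * cl1 y - cl2 x * cl2 y - cl3 x * cl3 y)
   (cl0 x * cl1 y + cl1 x * cl0 y + cl2 x * cl3 y - cl3 x * cl2 y)
   (cl0 x * cl2 y + cl2 x * cl0 y + cl3 x * cl1 y - cl1 x * cl3 y)
   (cl0 x * cl3 y + cl3 x * cl0 y + cl1 x * cl2 y - cl2 x * cl1 y)"
instance
  by standard (auto simp: zero_C2_def one_C2_def plus_C2_def minus_C2_def uminus_C2_def
      times_C2_def algebra_simps intro: C2.expand)
end

definition e1 :: C2 where "e1 = C2 0 1 0 0"
definition e2 :: C2 where "e2 = C2 0 0 1 0"
definition e12 :: C2 where "e12 = C2 0 0 0 1"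
definition of_cpx :: "complex \<Rightarrow> C2" where "of_cpx z = C2 z 0 0 0"

definition K :: "nat \<Rightarrow> C2 mat" where
  "K t = four_block_mat
     ((of_cpx (1/2) * (1 - of_cpx \<i> * e1)) \<cdot>\<^sub>m 1\<^sub>m t)
     ((of_cpx (1/2) * (e2 + of_cpx \<i> * e12)) \<cdot>\<^sub>m 1\<^sub>m t)
     ((of_cpx (1/2) * (- e2 + of_cpx \<i> * e12)) \<cdot>\<^sub>m 1\<^sub>m t)
     ((of_cpx (1/2) * (1 + of_cpx \<i> * e1)) \<cdot>\<^sub>m 1\<^sub>m t)"

end

theory Submission
  imports Defs
begin

lemma L1:
  assumes "B \<in> carrier_mat m n"
  shows "(c \<cdot>\<^sub>m 1\<^sub>m m) * B = c \<cdot>\<^sub>m (B :: C2 mat)"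
proof (rule eq_matI)
  fix i j assume ij: "i < dim_row (c \<cdot>\<^sub>m B)" "j < dim_col (c \<cdot>\<^sub>m B)"
  have "((c \<cdot>\<^sub>m 1\<^sub>m m) * B) $$ (i,j) = (\<Sum>k\<in>{0..<m}. (if i = k then c else 0) * B $$ (k,j))"
    using ij assms by (auto simp: scalar_prod_def intro!: sum.cong)
  also have "\<dots> = (\<Sum>k\<in>{0..<m}. if i = k then c * B $$ (k,j) else 0)"
    by (rule sum.cong) auto
  also have "\<dots> = c * B $$ (i,j)" using ij assms by simp
  finally show "((c \<cdot>\<^sub>m 1\<^sub>m m) * B) $$ (i,j) = (c \<cdot>\<^sub>m B) $$ (i,j)" using ij by simp
qed (use assms in auto)

lemma L2:
  assumes "B \<in> carrier_mat m n"
  shows "B * (c \<cdot>\<^sub>m 1\<^sub>m n) = map_mat (\<lambda>x. x * c) (B :: C2 mat)"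
proof (rule eq_matI)
  fix i j assume ij: "i < dim_row (map_mat (\<lambda>x. x * c) B)" "j < dim_col (map_mat (\<lambda>x. x * c) B)"
  have "(B * (c \<cdot>\<^sub>m 1\<^sub>m n)) $$ (i,j) = (\<Sum>k\<in>{0..<n}. B $$ (i,k) * (if k = j then c else 0))"
    using ij assms by (auto simp: scalar_prod_def intro!: sum.cong)
  also have "\<dots> = (\<Sum>k\<in>{0..<n}. if j = k then B $$ (i,k) * c else 0)"
    by (rule sum.cong) auto
  also have "\<dots> = B $$ (i,j) * c" using ij assms by simp
  finally show "(B * (c \<cdot>\<^sub>m 1\<^sub>m n)) $$ (i,j) = map_mat (\<lambda>x. x * c) B $$ (i,j)" using ij by simp
qed (use assms in auto)

lemma L3: "(c \<cdot>\<^sub>m 1\<^sub>m t) * (d \<cdot>\<^sub>m 1\<^sub>m t) = (c * d :: C2) \<cdot>\<^sub>m 1\<^sub>m t"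
  by (subst L1[of _ t t]) (auto intro!: eq_matI simp: mult.assoc)

lemma C2_eq: "x = y \<longleftrightarrow> cl0 x = cl0 y \<and> cl1 x = cl1 y \<and> cl2 x = cl2 y \<and> cl3 x = cl3 y"
  by (cases x; cases y) auto

lemmas C2_simps = C2_eq zero_C2_def one_C2_def plus_C2_def minus_C2_def uminus_C2_def
      times_C2_def e1_def e2_def e12_def of_cpx_def

lemma kk:
  defines "k1 \<equiv> of_cpx (1/2) * (1 - of_cpx \<i> * e1)"
    and "k2 \<equiv> of_cpx (1/2) * (e2 + of_cpx \<i> * e12)"
    and "k3 \<equiv> of_cpx (1/2) * (- e2 + of_cpx \<i> * e12)"
    and "k4 \<equiv> of_cpx (1/2) * (1 + of_cpx \<i> * e1)"
  shows "k1 * k1 + k2 * k3 = 1" "k1 * k2 + k2 * k4 = 0" "k3 * k1 + k4 * k3 = 0" "k3 * k2 + k4 * k4 = 1"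
  unfolding assms by (simp_all add: C2_simps algebra_simps; simp add: complex_eq_iff)+


theorem theorem10:
  fixes m n :: nat and A :: "C2 mat" and A0 A1 A2 A3 :: "complex mat"
  assumes "m > 0" and "n > 0"
    and "A0 \<in> carrier_mat m n" and "A1 \<in> carrier_mat m n"
    and "A2 \<in> carrier_mat m n" and "A3 \<in> carrier_mat m n"
    and "A = map_mat of_cpx A0 + map_mat (\<lambda>z. of_cpx z * e1) A1
           + map_mat (\<lambda>z. of_cpx z * e2) A2 + map_mat (\<lambda>z. of_cpx z * e12) A3"
  shows "(\<forall>t>0. invertible_mat (K t) \<and> inverts_mat (K t) (K t))
    \<and> K m * four_block_mat A (0\<^sub>m m n) (0\<^sub>m m n) A * K n
      = map_mat of_cpx (four_block_mat (A0 + \<i> \<cdot>\<^sub>m A1) (- (A2 + \<i> \<cdot>\<^sub>m A3))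
                                       (A2 - \<i> \<cdot>\<^sub>m A3) (A0 - \<i> \<cdot>\<^sub>m A1))"
proof -
  define k1 where "k1 = of_cpx (1/2) * (1 - of_cpx \<i> * e1)"
  define k2 where "k2 = of_cpx (1/2) * (e2 + of_cpx \<i> * e12)"
  define k3 where "k3 = of_cpx (1/2) * (- e2 + of_cpx \<i> * e12)"
  define k4 where "k4 = of_cpx (1/2) * (1 + of_cpx \<i> * e1)"
  have Kt: "K t = four_block_mat (k1 \<cdot>\<^sub>m 1\<^sub>m t) (k2 \<cdot>\<^sub>m 1\<^sub>m t) (k3 \<cdot>\<^sub>m 1\<^sub>m t) (k4 \<cdot>\<^sub>m 1\<^sub>m t)" for t
    unfolding K_def k1_def k2_def k3_def k4_def ..
  have KK: "K t * K t = 1\<^sub>m (2 * t)" for t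
  proof -
    have "K t * K t = four_block_mat ((k1 * k1 + k2 * k3) \<cdot>\<^sub>m 1\<^sub>m t) ((k1 * k2 + k2 * k4) \<cdot>\<^sub>m 1\<^sub>m t)
       ((k3 * k1 + k4 * k3) \<cdot>\<^sub>m 1\<^sub>m t) ((k3 * k2 + k4 * k4) \<cdot>\<^sub>m 1\<^sub>m t)"
      unfolding Kt
      by (subst mult_four_block_mat[where ?nr1.0=t and ?n1.0=t and ?n2.0=t and ?nr2.0=t and ?nc1.0=t and ?nc2.0=t]) (auto simp: L3 add_smult_distrib_left_mat)
    also have "\<dots> = 1\<^sub>m (2 * t)"
      unfolding k1_def k2_def k3_def k4_def kk by (rule eq_matI) auto
    finally show ?thesis .
  qed
  have dimK: "K t \<in> carrier_mat (2*t) (2*t)" for t unfolding Kt by auto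
  have part1: "\<forall>t>0. invertible_mat (K t) \<and> inverts_mat (K t) (K t)"
  proof (intro allI impI)
    fix t :: nat
    have d: "dim_row (K t) = 2*t" "dim_col (K t) = 2*t" using dimK[of t] by auto
    show "invertible_mat (K t) \<and> inverts_mat (K t) (K t)"
      unfolding invertible_mat_def inverts_mat_def square_mat.simps d KK by (auto intro!: exI[of _ "K t"] simp: d KK)
  qed
  have Ac: "A \<in> carrier_mat m n" using assms by auto
  have s1: "K m * four_block_mat A (0\<^sub>m m n) (0\<^sub>m m n) A
     = four_block_mat (k1 \<cdot>\<^sub>m A) (k2 \<cdot>\<^sub>m A) (k3 \<cdot>\<^sub>m A) (k4 \<cdot>\<^sub>m A)"
    unfolding Kt using Ac
    by (subst mult_four_block_mat[where ?nr1.0=m and ?n1.0=m and ?n2.0=m and ?nr2.0=m and ?nc1.0=n and ?nc2.0=n]) (auto simp: L1[OF Ac])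
  have s2: "four_block_mat (k1 \<cdot>\<^sub>m A) (k2 \<cdot>\<^sub>m A) (k3 \<cdot>\<^sub>m A) (k4 \<cdot>\<^sub>m A) * K n
     = four_block_mat (map_mat (\<lambda>x. x * k1) (k1 \<cdot>\<^sub>m A) + map_mat (\<lambda>x. x * k3) (k2 \<cdot>\<^sub>m A))
          (map_mat (\<lambda>x. x * k2) (k1 \<cdot>\<^sub>m A) + map_mat (\<lambda>x. x * k4) (k2 \<cdot>\<^sub>m A))
          (map_mat (\<lambda>x. x * k1) (k3 \<cdot>\<^sub>m A) + map_mat (\<lambda>x. x * k3) (k4 \<cdot>\<^sub>m A))
          (map_mat (\<lambda>x. x * k2) (k3 \<cdot>\<^sub>m A) + map_mat (\<lambda>x. x * k4) (k4 \<cdot>\<^sub>m A))"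
    unfolding Kt using Ac
    by (subst mult_four_block_mat[where ?nr1.0=m and ?n1.0=n and ?n2.0=n and ?nr2.0=m and ?nc1.0=n and ?nc2.0=n]) (auto simp: L2[of _ m n])
  have part2: "K m * four_block_mat A (0\<^sub>m m n) (0\<^sub>m m n) A * K n
      = map_mat of_cpx (four_block_mat (A0 + \<i> \<cdot>\<^sub>m A1) (- (A2 + \<i> \<cdot>\<^sub>m A3))
                                       (A2 - \<i> \<cdot>\<^sub>m A3) (A0 - \<i> \<cdot>\<^sub>m A1))"
    unfolding s1 s2
    apply (rule eq_matI)
    using assms(3-6) unfolding assms(7) k1_def k2_def k3_def k4_def
    by (auto simp: C2_simps algebra_simps complex_eq_iff) (simp_all add: field_simps)
  show ?thesis using part1 part2 by blast
qed

end
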